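(* Let $A\in\mathbb{R}^{n\times n}$ be positive definite with $\operatorname{Tr}(A)=d_1>0$, and let $d_2>0$ be such that for every $x\in\mathbb{R}^n$ and every integer $1\le i\le n$ with $x_1+\cdots+x_i=1$ we have $x^TAx\ge 1/d_2$. Then for every $2$-wise independent family $\mathcal{H}$ from $[n]$ to $\{-1,1\}$, \[\mathbb{E}_{h\in\mathcal{H}}\left[\sup_{1\le i\le n}(h_1+\cdots+h_i)^2\right]\le d_1d_2.\]
   Context: A $k$-wise independent family from $[n]$ to $\{-1,1\}$ is a probability distribution $\mathcal{H}$ over functions $h:[n]\to\{-1,1\}$ such that for any $k$ distinct indices the values $h_{i_1},\dots,h_{i_k}$ (where $h_i:=h(i)$) are independent uniformly random signs; $h$ is viewed as the vector $(h_1,\dots,h_n)\in\mathbb{R}^n$. *)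

theory Defs
  imports "HOL-Probability.Probability"
begin

text \<open>Matrices in R^(n x n) and vectors in R^n are represented as functions on
  natural-number indices; only the indices 1..n are meaningful.\<close>

definition quad_form :: "nat \<Rightarrow> (nat \<Rightarrow> nat \<Rightarrow> real) \<Rightarrow> (nat \<Rightarrow> real) \<Rightarrow> real" where
  "quad_form n A x = (\<Sum>i=1..n. \<Sum>j=1..n. x i * A i j * x j)"

definition trace_mat :: "nat \<Rightarrow> (nat \<Rightarrow> nat \<Rightarrow> real) \<Rightarrow> real" where
  "trace_mat n A = (\<Sum>i=1..n. A i i)"

definition pos_def_mat :: "nat \<Rightarrow> (nat \<Rightarrow> nat \<Rightarrow> real) \<Rightarrow> bool" where
  "pos_def_mat n A \<longleftrightarrow>
     (\<forall>i\<in>{1..n}. \<forall>j\<in>{1..n}. A i j = A j i) \<and>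
     (\<forall>x. (\<exists>i\<in>{1..n}. x i \<noteq> 0) \<longrightarrow> quad_form n A x > 0)"

definition k_wise_indep :: "nat \<Rightarrow> nat \<Rightarrow> (nat \<Rightarrow> real) pmf \<Rightarrow> bool" where
  "k_wise_indep n k H \<longleftrightarrow>
     (\<forall>h\<in>set_pmf H. \<forall>i\<in>{1..n}. h i \<in> {-1, 1}) \<and>
     (\<forall>I. I \<subseteq> {1..n} \<longrightarrow> card I = k \<longrightarrow>
        (\<forall>s. (\<forall>i\<in>I. s i \<in> {-1, 1}) \<longrightarrow>
           measure_pmf.prob H {h. \<forall>i\<in>I. h i = s i} = 1 / 2 ^ k))"

end

theory Submission
  imports Defs
begin

lemma ind_int:
  fixes H :: "(nat \<Rightarrow> real) pmf"
  shows "measure_pmf.expectation H (indicator S :: _ \<Rightarrow> real) = measure_pmf.prob H S"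
  by simp

lemma pair_exp:
  fixes H :: "(nat \<Rightarrow> real) pmf"
  assumes kw: "k_wise_indep n 2 H" and i: "i \<in> {1..n}" and j: "j \<in> {1..n}"
  shows "integrable H (\<lambda>h. h i * h j)"
    "measure_pmf.expectation H (\<lambda>h. h i * h j) = (if i = j then 1 else 0)"
proof -
  have sup: "\<And>h. h \<in> set_pmf H \<Longrightarrow> h i \<in> {-1,1} \<and> h j \<in> {-1,1}"
    using kw i j unfolding k_wise_indep_def by blast
  have AEb: "AE h in H. norm (h i * h j) \<le> 1"
    by (auto simp: AE_measure_pmf_iff dest!: sup)
  show int: "integrable H (\<lambda>h. h i * h j)"
    by (rule measure_pmf.integrable_const_bound[OF AEb]) simp
  show "measure_pmf.expectation H (\<lambda>h. h i * h j) = (if i = j then 1 else 0)"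
  proof (cases "i = j")
    case True
    have "AE h in H. h i * h j = 1" using True by (auto simp: AE_measure_pmf_iff dest!: sup)
    then have "measure_pmf.expectation H (\<lambda>h. h i * h j) = measure_pmf.expectation H (\<lambda>h. 1)"
      by (intro integral_cong_AE) auto
    then show ?thesis using True by simp
  next
    case False
    define P where "P = {h. \<forall>k\<in>{i,j}. h k = (\<lambda>_. 1::real) k}"
    define Q where "Q = {h. \<forall>k\<in>{i,j}. h k = (\<lambda>_. -1::real) k}"
    have cI: "card {i,j} = 2" using False by simp
    have sub: "{i,j} \<subseteq> {1..n}" using i j by auto
    have A: "\<forall>I. I \<subseteq> {1..n} \<longrightarrow> card I = 2 \<longrightarrow>
        (\<forall>s. (\<forall>i\<in>I. s i \<in> {-1, 1}) \<longrightarrow>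
           measure_pmf.prob H {h. \<forall>i\<in>I. h i = s i} = 1 / 2 ^ 2)"
      using kw unfolding k_wise_indep_def by blast
    have pP: "measure_pmf.prob H P = 1/2^2"
      unfolding P_def by (rule A[rule_format, OF sub cI]) simp
    have pQ: "measure_pmf.prob H Q = 1/2^2"
      unfolding Q_def by (rule A[rule_format, OF sub cI]) simp
    have "AE h in H. h i * h j = 2 * indicator P h + 2 * indicator Q h - 1"
      using False by (auto simp: AE_measure_pmf_iff P_def Q_def indicator_def dest!: sup)
    then have "measure_pmf.expectation H (\<lambda>h. h i * h j) =
        measure_pmf.expectation H (\<lambda>h. 2 * indicator P h + 2 * indicator Q h - 1)"
      by (intro integral_cong_AE) auto
    also have "\<dots> = measure_pmf.expectation H (\<lambda>h. 2 * indicator P h)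
         + measure_pmf.expectation H (\<lambda>h. 2 * indicator Q h) - measure_pmf.expectation H (\<lambda>h. 1)"
      by (subst Bochner_Integration.integral_diff; (subst Bochner_Integration.integral_add)?)
         (auto intro!: measure_pmf.integrable_const_bound[where B=4] simp: indicator_def)
    also have "\<dots> = 2 * measure_pmf.prob H P + 2 * measure_pmf.prob H Q - 1"
      by (simp only: integral_mult_right_zero ind_int) simp
    finally show ?thesis using pP pQ False by simp
  qed
qed

theorem lemma3p1:
  fixes n :: nat and A :: "nat \<Rightarrow> nat \<Rightarrow> real" and d1 d2 :: real
    and H :: "(nat \<Rightarrow> real) pmf"
  assumes "pos_def_mat n A"
    and "trace_mat n A = d1" and "d1 > 0"
    and "d2 > 0"
    and "\<And>x i. 1 \<le> i \<Longrightarrow> i \<le> n \<Longrightarrow> (\<Sum>k=1..i. x k) = 1 \<Longrightarrow> quad_form n A x \<ge> 1 / d2"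
    and "k_wise_indep n 2 H"
  shows "measure_pmf.expectation H (\<lambda>h. Max ((\<lambda>i. (\<Sum>k=1..i. h k)\<^sup>2) ` {1..n})) \<le> d1 * d2"
proof -
  note pd = assms(1) and tr = assms(2) and d1 = assms(3) and d2 = assms(4) and hyp = assms(5)
    and kw = assms(6)
  have n1: "n \<ge> 1"
  proof (rule ccontr)
    assume "\<not> n \<ge> 1" then have "n = 0" by simp
    then show False using tr d1 by (simp add: trace_mat_def)
  qed
  have sup: "\<And>h k. h \<in> set_pmf H \<Longrightarrow> k \<in> {1..n} \<Longrightarrow> h k \<in> {-1,1}"
    using kw unfolding k_wise_indep_def by blast
  define q where "q h = quad_form n A h" for h
  define C where "C = (\<Sum>i\<in>{1..n}. \<Sum>j\<in>{1..n}. \<bar>A i j\<bar>)"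
  define M where "M h = Max ((\<lambda>i. (\<Sum>k=1..i. h k)\<^sup>2) ` {1..n})" for h :: "nat \<Rightarrow> real"
  have qeq: "q h = (\<Sum>i\<in>{1..n}. \<Sum>j\<in>{1..n}. A i j * (h i * h j))" for h
    unfolding q_def quad_form_def by (intro sum.cong refl) (simp add: ac_simps)
  have qpos: "q h > 0" if h: "h \<in> set_pmf H" for h
  proof -
    have "h 1 \<noteq> 0" using sup[OF h, of 1] n1 by auto
    then have "\<exists>i\<in>{1..n}. h i \<noteq> 0" using n1 by auto
    then show ?thesis using pd unfolding pos_def_mat_def q_def by blast
  qed
  have qC: "\<bar>q h\<bar> \<le> C" if h: "h \<in> set_pmf H" for h
  proof -
    have "\<bar>q h\<bar> \<le> (\<Sum>i\<in>{1..n}. \<bar>\<Sum>j\<in>{1..n}. A i j * (h i * h j)\<bar>)"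
      unfolding qeq by (rule sum_abs)
    also have "\<dots> \<le> (\<Sum>i\<in>{1..n}. \<Sum>j\<in>{1..n}. \<bar>A i j * (h i * h j)\<bar>)"
      by (intro sum_mono sum_abs)
    also have "\<dots> = C" unfolding C_def
    proof (intro sum.cong refl)
      fix i j assume "i \<in> {1..n}" "j \<in> {1..n}"
      then have "h i \<in> {-1,1}" "h j \<in> {-1,1}" using sup[OF h] by auto
      then show "\<bar>A i j * (h i * h j)\<bar> = \<bar>A i j\<bar>" by (auto simp: abs_mult)
    qed
    finally show ?thesis .
  qed
  have Si: "(\<Sum>k=1..i. h k)\<^sup>2 \<le> d2 * q h" if h: "h \<in> set_pmf H" and i: "i \<in> {1..n}" for h i
  proof (cases "(\<Sum>k=1..i. h k) = 0")
    case True then show ?thesis using qpos[OF h] d2 by simp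
  next
    case False
    define S where "S = (\<Sum>k=1..i. h k)"
    have "(\<Sum>k=1..i. h k / S) = 1" using False unfolding S_def by (simp add: sum_divide_distrib[symmetric])
    then have "quad_form n A (\<lambda>k. h k / S) \<ge> 1 / d2" using hyp i by auto
    moreover have "quad_form n A (\<lambda>k. h k / S) = q h / S\<^sup>2"
      unfolding q_def quad_form_def by (simp add: sum_divide_distrib power2_eq_square)
    ultimately have "1 / d2 \<le> q h / S\<^sup>2" by simp
    moreover have "S\<^sup>2 > 0" using False S_def by simp
    ultimately show ?thesis using d2 unfolding S_def[symmetric] by (simp add: field_simps)
  qed
  have Mle: "M h \<le> d2 * q h" if h: "h \<in> set_pmf H" for h
    unfolding M_def using n1 Si[OF h] by (subst Max_le_iff) auto
  have Mge: "M h \<ge> 0" for h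
  proof -
    have "(\<Sum>k=1..1. h k)\<^sup>2 \<le> M h" unfolding M_def using n1
      by (intro Max_ge finite_imageI finite_atLeastAtMost image_eqI[where x=1]) auto
    then show ?thesis by (smt (verit) zero_le_power2)
  qed
  have intq: "integrable H q"
    unfolding qeq using pair_exp(1)[OF kw] by (auto intro!: Bochner_Integration.integrable_sum integrable_mult_right)
  have intM: "integrable H M"
  proof (rule measure_pmf.integrable_const_bound[where B = "d2 * C"])
    show "AE h in H. norm (M h) \<le> d2 * C"
      unfolding AE_measure_pmf_iff
    proof
      fix h assume h: "h \<in> set_pmf H"
      have "norm (M h) = M h" using Mge by simp
      also have "\<dots> \<le> d2 * q h" by (rule Mle[OF h])
      also have "\<dots> \<le> d2 * C" using qC[OF h] d2 by (intro mult_left_mono) auto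
      finally show "norm (M h) \<le> d2 * C" .
    qed
  qed simp
  have Eq: "measure_pmf.expectation H q = d1"
  proof -
    have "measure_pmf.expectation H q =
        (\<Sum>i\<in>{1..n}. \<Sum>j\<in>{1..n}. A i j * measure_pmf.expectation H (\<lambda>h. h i * h j))"
      unfolding qeq using pair_exp(1)[OF kw]
      by (subst Bochner_Integration.integral_sum, fastforce intro!: Bochner_Integration.integrable_sum integrable_mult_right,
          intro sum.cong refl, subst Bochner_Integration.integral_sum, auto)
    also have "\<dots> = (\<Sum>i\<in>{1..n}. \<Sum>j\<in>{1..n}. A i j * (if i = j then 1 else 0))"
      using pair_exp(2)[OF kw] by (intro sum.cong refl) auto
    also have "\<dots> = trace_mat n A" unfolding trace_mat_def
      by (intro sum.cong refl) (simp add: if_distrib cong: if_cong)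
    finally show ?thesis using tr by simp
  qed
  have "measure_pmf.expectation H M \<le> measure_pmf.expectation H (\<lambda>h. d2 * q h)"
    using intM intq Mle by (intro integral_mono_AE) (auto simp: AE_measure_pmf_iff)
  also have "\<dots> = d2 * d1" using Eq by simp
  finally show ?thesis unfolding M_def by (simp add: mult.commute)
qed

end
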